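(* Let $M$ be a matroid on a finite set $E$, with dual $M^*$, and let $\mathcal{C}$ be a family of subsets of $E$. Then $\mathcal{C}$ is a modular cyclic family in $M$ if and only if $\{E\setminus C: C\in\mathcal{C}\}$ is a modular cut in $M^*$.
   Context: A set $X\subseteq E$ is cyclic in $M$ if it is a union of circuits; $\emptyset$ counts as cyclic. A pair $X,Y$ is modular in $M$ if $r(X)+r(Y)=r(X\cap Y)+r(X\cup Y)$. The cyclic sets form a lattice with join $C_1\cup C_2$ and meet $\mathrm{cyc}(C_1\cap C_2)$. Here $\mathrm{cyc}(X)$ is the largest cyclic subset of $X$, obtained by removing the coloops of $M|_X$. A modular cyclic family is a family of cyclic sets that is down-closed in this lattice and contains $X\cup Y$ for every modular pair $X,Y$ of its members. A modular cut of a matroid is a family of flats that is up-closed in the lattice of flats and contains $X\cap Y$ for every modular pair $X,Y$ of its members. *)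

theory Defs
  imports Main
begin

definition matroid :: "'a set \<Rightarrow> 'a set set \<Rightarrow> bool" where
  "matroid E indep \<longleftrightarrow> finite E \<and> (\<forall>I\<in>indep. I \<subseteq> E) \<and> {} \<in> indep
     \<and> (\<forall>I J. J \<in> indep \<longrightarrow> I \<subseteq> J \<longrightarrow> I \<in> indep)
     \<and> (\<forall>I J. I \<in> indep \<longrightarrow> J \<in> indep \<longrightarrow> card I < card J \<longrightarrow>
           (\<exists>x\<in>J - I. insert x I \<in> indep))"

definition mrank :: "'a set set \<Rightarrow> 'a set \<Rightarrow> nat" where
  "mrank indep X = Max (card ` {I. I \<in> indep \<and> I \<subseteq> X})"

definition basis :: "'a set set \<Rightarrow> 'a set \<Rightarrow> bool" where
  "basis indep B \<longleftrightarrow> B \<in> indep \<and> (\<forall>I\<in>indep. B \<subseteq> I \<longrightarrow> I = B)"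

definition dual_indep :: "'a set \<Rightarrow> 'a set set \<Rightarrow> 'a set set" where
  "dual_indep E indep = {I. I \<subseteq> E \<and> (\<exists>B. basis indep B \<and> B \<subseteq> E - I)}"

definition circuit :: "'a set \<Rightarrow> 'a set set \<Rightarrow> 'a set \<Rightarrow> bool" where
  "circuit E indep C \<longleftrightarrow> C \<subseteq> E \<and> C \<notin> indep \<and> (\<forall>x\<in>C. C - {x} \<in> indep)"

text \<open>Cyclic sets: unions of circuits (the empty set is cyclic).\<close>
definition cyclic :: "'a set \<Rightarrow> 'a set set \<Rightarrow> 'a set \<Rightarrow> bool" where
  "cyclic E indep X \<longleftrightarrow> (\<exists>S. (\<forall>C\<in>S. circuit E indep C) \<and> X = \<Union>S)"

definition flat :: "'a set \<Rightarrow> 'a set set \<Rightarrow> 'a set \<Rightarrow> bool" where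
  "flat E indep X \<longleftrightarrow> X \<subseteq> E \<and> (\<forall>e\<in>E - X. mrank indep (insert e X) > mrank indep X)"

definition modular_pair :: "'a set set \<Rightarrow> 'a set \<Rightarrow> 'a set \<Rightarrow> bool" where
  "modular_pair indep X Y \<longleftrightarrow>
     mrank indep X + mrank indep Y = mrank indep (X \<inter> Y) + mrank indep (X \<union> Y)"

definition modular_cyclic_family :: "'a set \<Rightarrow> 'a set set \<Rightarrow> 'a set set \<Rightarrow> bool" where
  "modular_cyclic_family E indep \<C> \<longleftrightarrow>
     (\<forall>C\<in>\<C>. cyclic E indep C)
     \<and> (\<forall>C\<in>\<C>. \<forall>D. cyclic E indep D \<longrightarrow> D \<subseteq> C \<longrightarrow> D \<in> \<C>)
     \<and> (\<forall>X\<in>\<C>. \<forall>Y\<in>\<C>. modular_pair indep X Y \<longrightarrow> X \<union> Y \<in> \<C>)"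

definition modular_cut :: "'a set \<Rightarrow> 'a set set \<Rightarrow> 'a set set \<Rightarrow> bool" where
  "modular_cut E indep \<F> \<longleftrightarrow>
     (\<forall>F\<in>\<F>. flat E indep F)
     \<and> (\<forall>F\<in>\<F>. \<forall>G. flat E indep G \<longrightarrow> F \<subseteq> G \<longrightarrow> G \<in> \<F>)
     \<and> (\<forall>X\<in>\<F>. \<forall>Y\<in>\<F>. modular_pair indep X Y \<longrightarrow> X \<inter> Y \<in> \<F>)"

end

theory Submission
  imports Defs
begin

lemma m_finite: "matroid E indep \<Longrightarrow> finite E"
  by (simp add: matroid_def)
lemma m_sub: "matroid E indep \<Longrightarrow> I \<in> indep \<Longrightarrow> I \<subseteq> E"
  by (simp add: matroid_def)
lemma m_empty: "matroid E indep \<Longrightarrow> {} \<in> indep"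
  by (simp add: matroid_def)
lemma m_down: "matroid E indep \<Longrightarrow> J \<in> indep \<Longrightarrow> I \<subseteq> J \<Longrightarrow> I \<in> indep"
  unfolding matroid_def by blast
lemma m_aug: "matroid E indep \<Longrightarrow> I \<in> indep \<Longrightarrow> J \<in> indep \<Longrightarrow> card I < card J
   \<Longrightarrow> \<exists>x\<in>J - I. insert x I \<in> indep"
  unfolding matroid_def by blast
lemma m_ifin: "matroid E indep \<Longrightarrow> I \<in> indep \<Longrightarrow> finite I"
  using finite_subset[OF m_sub m_finite] by blast

lemma rset_finite: "matroid E indep \<Longrightarrow> finite (card ` {I. I \<in> indep \<and> I \<subseteq> X})"
proof -
  assume m: "matroid E indep"
  have "{I. I \<in> indep \<and> I \<subseteq> X} \<subseteq> Pow E" using m_sub[OF m] by blast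
  then show ?thesis using m_finite[OF m] by (meson finite_Pow_iff finite_imageI finite_subset)
qed

lemma rank_ge: "matroid E indep \<Longrightarrow> I \<in> indep \<Longrightarrow> I \<subseteq> X \<Longrightarrow> card I \<le> mrank indep X"
  unfolding mrank_def using rset_finite by (intro Max_ge) auto

lemma rank_att: "matroid E indep \<Longrightarrow> \<exists>I. I \<in> indep \<and> I \<subseteq> X \<and> card I = mrank indep X"
proof -
  assume m: "matroid E indep"
  have "mrank indep X \<in> card ` {I. I \<in> indep \<and> I \<subseteq> X}"
    unfolding mrank_def using rset_finite[OF m] m_empty[OF m] by (intro Max_in) auto
  then show ?thesis by auto
qed

lemma rank_mono: "matroid E indep \<Longrightarrow> X \<subseteq> Y \<Longrightarrow> mrank indep X \<le> mrank indep Y"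
proof -
  assume m: "matroid E indep" and s: "X \<subseteq> Y"
  obtain I where "I \<in> indep" "I \<subseteq> X" "card I = mrank indep X" using rank_att[OF m] by blast
  then show ?thesis using rank_ge[OF m, of I Y] s by auto
qed

lemma extend_aux: "matroid E indep \<Longrightarrow> mrank indep X - card J = n \<Longrightarrow> J \<in> indep \<Longrightarrow> J \<subseteq> X
  \<Longrightarrow> \<exists>I. I \<in> indep \<and> J \<subseteq> I \<and> I \<subseteq> X \<and> card I = mrank indep X"
proof (induction n arbitrary: J)
  case 0
  have "card J \<le> mrank indep X" using rank_ge[OF 0(1,3,4)] .
  then have "card J = mrank indep X" using 0(2) by simp
  then show ?case using 0(3,4) by blast
next
  case (Suc n)
  obtain K where K: "K \<in> indep" "K \<subseteq> X" "card K = mrank indep X" using rank_att[OF Suc.prems(1)] by blast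
  have "card J < card K" using Suc.prems K by simp
  then obtain x where x: "x \<in> K - J" "insert x J \<in> indep" using m_aug[OF Suc.prems(1) Suc.prems(3) K(1)] by blast
  have fJ: "finite J" using m_ifin[OF Suc.prems(1,3)] .
  have "card (insert x J) = Suc (card J)" using fJ x by simp
  then have "mrank indep X - card (insert x J) = n" using Suc.prems by simp
  moreover have "insert x J \<subseteq> X" using x K Suc.prems by blast
  ultimately obtain I where "I \<in> indep \<and> insert x J \<subseteq> I \<and> I \<subseteq> X \<and> card I = mrank indep X"
    using Suc.IH[OF Suc.prems(1)] x by blast
  then show ?case by blast
qed

lemma extend: "matroid E indep \<Longrightarrow> J \<in> indep \<Longrightarrow> J \<subseteq> X
  \<Longrightarrow> \<exists>I. I \<in> indep \<and> J \<subseteq> I \<and> I \<subseteq> X \<and> card I = mrank indep X"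
  using extend_aux by blast

lemma card_basis: "matroid E indep \<Longrightarrow> B \<in> indep \<Longrightarrow> card B = mrank indep E \<Longrightarrow> basis indep B"
  unfolding basis_def
proof (intro conjI ballI impI)
  fix I assume m: "matroid E indep" and b: "B \<in> indep" "card B = mrank indep E" and I: "I \<in> indep" "B \<subseteq> I"
  have c1: "card I \<le> card B" using rank_ge[OF m I(1) m_sub[OF m I(1)]] b by simp
  have fI: "finite I" using m_ifin[OF m I(1)] .
  have "card B \<le> card I" using card_mono[OF fI I(2)] .
  then have "card B = card I" using c1 by linarith
  from card_subset_eq[OF fI I(2) this] show "I = B" by (rule sym)
qed

lemma basis_card: "matroid E indep \<Longrightarrow> basis indep B \<Longrightarrow> card B = mrank indep E"
proof -
  assume m: "matroid E indep" and b: "basis indep B"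
  then have bi: "B \<in> indep" and mx: "\<And>I. I \<in> indep \<Longrightarrow> B \<subseteq> I \<Longrightarrow> I = B" unfolding basis_def by auto
  obtain I where "I \<in> indep" "B \<subseteq> I" "I \<subseteq> E" "card I = mrank indep E"
    using extend[OF m bi m_sub[OF m bi]] by blast
  then show ?thesis using mx by auto
qed

lemma basis_ex: "matroid E indep \<Longrightarrow> \<exists>B. basis indep B"
  using extend[of E indep "{}" E] m_empty card_basis by blast

lemma dual_sub: "I \<in> dual_indep E indep \<Longrightarrow> I \<subseteq> E"
  unfolding dual_indep_def by blast

lemma dual_rank: assumes m: "matroid E indep" and A: "A \<subseteq> E"
  shows "mrank (dual_indep E indep) A + mrank indep E = card A + mrank indep (E - A)"
proof -
  let ?D = "dual_indep E indep"
  have fE: "finite E" using m_finite[OF m] .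
  have fA: "finite A" using A fE finite_subset by blast
  have fin: "finite (card ` {I. I \<in> ?D \<and> I \<subseteq> A})"
    using fA by (intro finite_imageI) (auto intro: finite_subset[of _ "Pow A"])
  have e: "{} \<in> ?D" using basis_ex[OF m] m_sub[OF m] unfolding dual_indep_def basis_def by auto
  have le: "mrank ?D A + mrank indep E \<le> card A + mrank indep (E - A)"
  proof -
    have "mrank ?D A \<in> card ` {I. I \<in> ?D \<and> I \<subseteq> A}"
      unfolding mrank_def using fin e by (intro Max_in) auto
    then obtain I where I: "I \<in> ?D" "I \<subseteq> A" "card I = mrank ?D A" by auto
    then obtain B where B: "basis indep B" "B \<subseteq> E - I" unfolding dual_indep_def by auto
    have Bi: "B \<in> indep" using B unfolding basis_def by auto
    have cB: "card B = mrank indep E" using basis_card[OF m B(1)] .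
    have fB: "finite B" using m_ifin[OF m Bi] .
    have "B \<inter> (E - A) \<in> indep" using m_down[OF m Bi] by blast
    then have c1: "card (B \<inter> (E - A)) \<le> mrank indep (E - A)" using rank_ge[OF m] by blast
    have c2: "card (B \<inter> A) \<le> card (A - I)" using B fA by (intro card_mono) auto
    have c3: "card (A - I) + card I = card A" using I(2) fA
      by (metis card_Diff_subset finite_subset le_add_diff_inverse2 card_mono)
    have "B = (B \<inter> A) \<union> (B \<inter> (E - A))" using m_sub[OF m Bi] by blast
    then have c4: "card B = card (B \<inter> A) + card (B \<inter> (E - A))"
      using fB by (metis card_Un_disjoint Diff_disjoint inf_le1 finite_subset Int_Diff inf_commute inf_assoc Int_empty_right)
    show ?thesis using c1 c2 c3 c4 cB I(3) by linarith
  qed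
  have ge: "card A + mrank indep (E - A) \<le> mrank ?D A + mrank indep E"
  proof -
    obtain J where J: "J \<in> indep" "J \<subseteq> E - A" "card J = mrank indep (E - A)" using rank_att[OF m] by blast
    obtain B where B: "B \<in> indep" "J \<subseteq> B" "B \<subseteq> E" "card B = mrank indep E"
      using extend[OF m J(1)] J(2) by blast
    have bB: "basis indep B" using card_basis[OF m B(1,4)] .
    have fB: "finite B" using m_ifin[OF m B(1)] .
    have "B \<inter> (E - A) \<in> indep" using m_down[OF m B(1)] by blast
    then have "card (B \<inter> (E - A)) \<le> card J" using rank_ge[OF m] J(3) by (metis Int_lower2)
    moreover have "J \<subseteq> B \<inter> (E - A)" using J B by blast
    moreover have fBI: "finite (B \<inter> (E - A))" using fB by simp
    ultimately have BJ: "B \<inter> (E - A) = J"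
      using card_subset_eq[OF fBI] card_mono[OF fBI] by (metis le_antisym)
    define I where "I = A - B"
    have ID: "I \<in> ?D" unfolding dual_indep_def I_def using bB B(3) A by blast
    have "I \<subseteq> A" unfolding I_def by blast
    then have cI: "card I \<le> mrank ?D A" unfolding mrank_def using fin ID by (intro Max_ge) auto
    have c5: "card I + card (B \<inter> A) = card A" unfolding I_def using fA
      by (metis Diff_Diff_Int Int_commute card_Diff_subset_Int card_mono inf_le1 le_add_diff_inverse2 finite_Int)
    have "B = (B \<inter> A) \<union> (B \<inter> (E - A))" using B(3) by blast
    then have c4: "card B = card (B \<inter> A) + card (B \<inter> (E - A))"
      using fB by (metis card_Un_disjoint Diff_disjoint inf_le1 finite_subset Int_Diff inf_commute inf_assoc Int_empty_right)
    have "card (B \<inter> (E - A)) = card J" using BJ by simp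
    then show ?thesis using c4 c5 cI B(4) J(3) by linarith
  qed
  show ?thesis using le ge by linarith
qed

lemma coloop: assumes m: "matroid E indep" and X: "X \<subseteq> E" and e: "e \<in> X"
  shows "mrank indep (X - {e}) = mrank indep X \<longleftrightarrow> (\<exists>C. circuit E indep C \<and> e \<in> C \<and> C \<subseteq> X)"
proof
  assume eq: "mrank indep (X - {e}) = mrank indep X"
  obtain I where I: "I \<in> indep" "I \<subseteq> X - {e}" "card I = mrank indep (X - {e})" using rank_att[OF m] by blast
  have fI: "finite I" using m_ifin[OF m I(1)] .
  have "insert e I \<notin> indep"
  proof
    assume "insert e I \<in> indep"
    then have "card (insert e I) \<le> mrank indep X" using rank_ge[OF m] I(2) e by blast
    moreover have "e \<notin> I" using I(2) by blast
    then have "card (insert e I) = Suc (card I)" using fI by simp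
    ultimately show False using I(3) eq by simp
  qed
  then have "insert e I \<subseteq> insert e I \<and> insert e I \<notin> indep" by simp
  then have "\<exists>C. (C \<subseteq> insert e I \<and> C \<notin> indep) \<and> (\<forall>C'. C' \<subseteq> insert e I \<and> C' \<notin> indep \<longrightarrow> card C \<le> card C')"
    by (rule ex_has_least_nat)
  then obtain C where C: "C \<subseteq> insert e I \<and> C \<notin> indep"
    and mn0: "\<forall>C'. C' \<subseteq> insert e I \<and> C' \<notin> indep \<longrightarrow> card C \<le> card C'"
    by blast
  have mn: "\<And>C'. C' \<subseteq> insert e I \<and> C' \<notin> indep \<Longrightarrow> card C \<le> card C'" using mn0 by blast
  have fC: "finite C" using C fI finite_subset by blast
  have eC: "e \<in> C"
  proof (rule ccontr)
    assume "e \<notin> C"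
    then have "C \<subseteq> I" using C by blast
    then show False using m_down[OF m I(1)] C by blast
  qed
  have "\<forall>x\<in>C. C - {x} \<in> indep"
  proof
    fix x assume x: "x \<in> C"
    show "C - {x} \<in> indep"
    proof (rule ccontr)
      assume "C - {x} \<notin> indep"
      then have "card C \<le> card (C - {x})" using mn C by blast
      moreover have "card (C - {x}) < card C" using fC x by (meson card_Diff1_less)
      ultimately show False by simp
    qed
  qed
  moreover have "C \<subseteq> E" using C I(2) X e by blast
  ultimately have "circuit E indep C" unfolding circuit_def using C by blast
  moreover have "C \<subseteq> X" using C I(2) e by blast
  ultimately show "\<exists>C. circuit E indep C \<and> e \<in> C \<and> C \<subseteq> X" using eC by blast
next
  assume "\<exists>C. circuit E indep C \<and> e \<in> C \<and> C \<subseteq> X"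
  then obtain C where C: "circuit E indep C" "e \<in> C" "C \<subseteq> X" by blast
  have Ci: "C - {e} \<in> indep" "C \<notin> indep" using C unfolding circuit_def by auto
  obtain I where I: "I \<in> indep" "C - {e} \<subseteq> I" "I \<subseteq> X - {e}" "card I = mrank indep (X - {e})"
    using extend[OF m Ci(1)] C(3) by blast
  have le: "mrank indep (X - {e}) \<le> mrank indep X" using rank_mono[OF m] by blast
  have "\<not> mrank indep (X - {e}) < mrank indep X"
  proof
    assume lt: "mrank indep (X - {e}) < mrank indep X"
    obtain K where K: "K \<in> indep" "K \<subseteq> X" "card K = mrank indep X" using rank_att[OF m] by blast
    obtain x where x: "x \<in> K - I" "insert x I \<in> indep" using m_aug[OF m I(1) K(1)] lt I(4) K(3) by auto
    show False
    proof (cases "x = e")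
      case True
      then have "C \<subseteq> insert x I" using I(2) C(2) by blast
      then show False using m_down[OF m x(2)] Ci(2) by blast
    next
      case False
      then have "insert x I \<subseteq> X - {e}" using x K I by blast
      then have "card (insert x I) \<le> mrank indep (X - {e})" using rank_ge[OF m x(2)] by blast
      moreover have "card (insert x I) = Suc (card I)" using m_ifin[OF m I(1)] x by simp
      ultimately show False using I(4) by simp
    qed
  qed
  then show "mrank indep (X - {e}) = mrank indep X" using le by simp
qed

lemma cyclic_iff: "cyclic E indep X \<longleftrightarrow> X \<subseteq> E \<and> (\<forall>e\<in>X. \<exists>C. circuit E indep C \<and> e \<in> C \<and> C \<subseteq> X)"
proof
  assume "cyclic E indep X"
  then obtain S where S: "\<forall>C\<in>S. circuit E indep C" "X = \<Union>S" unfolding cyclic_def by blast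
  then show "X \<subseteq> E \<and> (\<forall>e\<in>X. \<exists>C. circuit E indep C \<and> e \<in> C \<and> C \<subseteq> X)"
    unfolding circuit_def by blast
next
  assume a: "X \<subseteq> E \<and> (\<forall>e\<in>X. \<exists>C. circuit E indep C \<and> e \<in> C \<and> C \<subseteq> X)"
  let ?S = "{C. circuit E indep C \<and> C \<subseteq> X}"
  have "X \<subseteq> \<Union>?S"
  proof
    fix e assume "e \<in> X"
    then obtain C where "circuit E indep C" "e \<in> C" "C \<subseteq> X" using a by blast
    then show "e \<in> \<Union>?S" by blast
  qed
  then have eq: "X = \<Union>?S" by blast
  have h1: "\<forall>C\<in>?S. circuit E indep C" by blast
  show "cyclic E indep X" unfolding cyclic_def by (rule exI[of _ ?S], rule conjI[OF h1 eq])
qed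

lemma flat_dual: assumes m: "matroid E indep" and X: "X \<subseteq> E"
  shows "flat E (dual_indep E indep) (E - X) \<longleftrightarrow> (\<forall>e\<in>X. mrank indep (X - {e}) = mrank indep X)"
proof -
  let ?D = "dual_indep E indep"
  have fE: "finite E" using m_finite[OF m] .
  have key: "mrank ?D (insert e (E - X)) > mrank ?D (E - X) \<longleftrightarrow> mrank indep (X - {e}) = mrank indep X"
    if e: "e \<in> X" for e
  proof -
    have s1: "insert e (E - X) \<subseteq> E" using e X by blast
    have d1: "E - insert e (E - X) = X - {e}" using X by blast
    have d2: "E - (E - X) = X" using X by blast
    have r1: "mrank ?D (insert e (E - X)) + mrank indep E = card (insert e (E - X)) + mrank indep (X - {e})"
      using dual_rank[OF m s1] d1 by simp
    have r2: "mrank ?D (E - X) + mrank indep E = card (E - X) + mrank indep X"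
      using dual_rank[OF m, of "E - X"] d2 by simp
    have c: "card (insert e (E - X)) = Suc (card (E - X))" using fE e by simp
    have le: "mrank indep (X - {e}) \<le> mrank indep X" using rank_mono[OF m] by blast
    show ?thesis using r1 r2 c le by linarith
  qed
  have "E - (E - X) = X" using X by blast
  then show ?thesis unfolding flat_def using key by auto
qed

lemma cyclic_flat: assumes m: "matroid E indep" and X: "X \<subseteq> E"
  shows "cyclic E indep X \<longleftrightarrow> flat E (dual_indep E indep) (E - X)"
  using flat_dual[OF m X] coloop[OF m X] cyclic_iff[of E indep X] X by blast

lemma mod_dual: assumes m: "matroid E indep" and X: "X \<subseteq> E" and Y: "Y \<subseteq> E"
  shows "modular_pair (dual_indep E indep) (E - X) (E - Y) \<longleftrightarrow> modular_pair indep X Y"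
proof -
  let ?D = "dual_indep E indep"
  have fE: "finite E" using m_finite[OF m] .
  have a: "mrank ?D (E - X) + mrank indep E = card (E - X) + mrank indep X"
    using dual_rank[OF m Diff_subset[of E "X"]] X Y by (metis Diff_Diff_Int Int_absorb1 Int_commute le_supI le_infI1)
  have b: "mrank ?D (E - Y) + mrank indep E = card (E - Y) + mrank indep Y"
    using dual_rank[OF m Diff_subset[of E "Y"]] X Y by (metis Diff_Diff_Int Int_absorb1 Int_commute le_supI le_infI1)
  have i: "(E - X) \<inter> (E - Y) = E - (X \<union> Y)" by blast
  have u: "(E - X) \<union> (E - Y) = E - (X \<inter> Y)" by blast
  have c: "mrank ?D (E - (X \<union> Y)) + mrank indep E = card (E - (X \<union> Y)) + mrank indep (X \<union> Y)"
    using dual_rank[OF m Diff_subset[of E "X \<union> Y"]] X Y by (metis Diff_Diff_Int Int_absorb1 Int_commute le_supI le_infI1)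
  have d: "mrank ?D (E - (X \<inter> Y)) + mrank indep E = card (E - (X \<inter> Y)) + mrank indep (X \<inter> Y)"
    using dual_rank[OF m Diff_subset[of E "X \<inter> Y"]] X Y by (metis Diff_Diff_Int Int_absorb1 Int_commute le_supI le_infI1)
  have cc: "card (E - X) + card (E - Y) = card (E - (X \<union> Y)) + card (E - (X \<inter> Y))"
    using card_Un_Int[of "E - X" "E - Y"] fE i u by simp
  show ?thesis unfolding modular_pair_def i u using a b c d cc by linarith
qed

theorem proposition2p1:
  fixes E :: "'a set" and indep :: "'a set set" and \<C> :: "'a set set"
  assumes "matroid E indep"
    and "\<forall>C\<in>\<C>. C \<subseteq> E"
  shows "modular_cyclic_family E indep \<C> \<longleftrightarrow>
         modular_cut E (dual_indep E indep) ((\<lambda>C. E - C) ` \<C>)"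
proof -
  note m = assms(1)
  have sub: "\<And>C. C \<in> \<C> \<Longrightarrow> C \<subseteq> E" using assms(2) by blast
  let ?D = "dual_indep E indep"
  let ?F = "(\<lambda>C. E - C) ` \<C>"
  have inj: "\<And>X Y. X \<subseteq> E \<Longrightarrow> Y \<subseteq> E \<Longrightarrow> E - X = E - Y \<Longrightarrow> X = Y" by blast
  show ?thesis
  proof
    assume a: "modular_cyclic_family E indep \<C>"
    then have a1: "\<forall>C\<in>\<C>. cyclic E indep C"
      and a2: "\<forall>C\<in>\<C>. \<forall>D. cyclic E indep D \<longrightarrow> D \<subseteq> C \<longrightarrow> D \<in> \<C>"
      and a3: "\<forall>X\<in>\<C>. \<forall>Y\<in>\<C>. modular_pair indep X Y \<longrightarrow> X \<union> Y \<in> \<C>"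
      unfolding modular_cyclic_family_def by (meson conjunct1 conjunct2)+
    have b1: "\<forall>F\<in>?F. flat E ?D F"
    proof
      fix F assume "F \<in> ?F"
      then obtain C where C: "C \<in> \<C>" "F = E - C" by blast
      show "flat E ?D F" using cyclic_flat[OF m sub[OF C(1)]] a1 C by blast
    qed
    have b2: "\<forall>F\<in>?F. \<forall>G. flat E ?D G \<longrightarrow> F \<subseteq> G \<longrightarrow> G \<in> ?F"
    proof (intro ballI allI impI)
      fix F G assume F: "F \<in> ?F" and G: "flat E ?D G" "F \<subseteq> G"
      then obtain C where C: "C \<in> \<C>" "F = E - C" by blast
      have GE: "G \<subseteq> E" using G unfolding flat_def by blast
      have eG: "E - (E - G) = G" using GE by blast
      have "cyclic E indep (E - G)" using cyclic_flat[OF m, of "E - G"] eG G by simp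
      moreover have "E - G \<subseteq> C" using C G by blast
      ultimately have "E - G \<in> \<C>" using a2 C by blast
      then show "G \<in> ?F" using eG by (metis image_eqI)
    qed
    have b3: "\<forall>X\<in>?F. \<forall>Y\<in>?F. modular_pair ?D X Y \<longrightarrow> X \<inter> Y \<in> ?F"
    proof (intro ballI impI)
      fix X' Y' assume X': "X' \<in> ?F" and Y': "Y' \<in> ?F" and mp: "modular_pair ?D X' Y'"
      obtain X where X: "X \<in> \<C>" "X' = E - X" using X' by blast
      obtain Y where Y: "Y \<in> \<C>" "Y' = E - Y" using Y' by blast
      have "modular_pair indep X Y" using mod_dual[OF m sub[OF X(1)] sub[OF Y(1)]] mp X Y by simp
      then have "X \<union> Y \<in> \<C>" using a3 X Y by blast
      moreover have "X' \<inter> Y' = E - (X \<union> Y)" using X Y by blast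
      ultimately show "X' \<inter> Y' \<in> ?F" by blast
    qed
    show "modular_cut E ?D ?F" unfolding modular_cut_def using b1 b2 b3 by blast
  next
    assume a: "modular_cut E ?D ?F"
    then have a1: "\<forall>F\<in>?F. flat E ?D F"
      and a2: "\<forall>F\<in>?F. \<forall>G. flat E ?D G \<longrightarrow> F \<subseteq> G \<longrightarrow> G \<in> ?F"
      and a3: "\<forall>X\<in>?F. \<forall>Y\<in>?F. modular_pair ?D X Y \<longrightarrow> X \<inter> Y \<in> ?F"
      unfolding modular_cut_def by (meson conjunct1 conjunct2)+
    have b1: "\<forall>C\<in>\<C>. cyclic E indep C"
    proof
      fix C assume C: "C \<in> \<C>"
      then have "E - C \<in> ?F" by blast
      then show "cyclic E indep C" using cyclic_flat[OF m sub[OF C]] a1 by blast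
    qed
    have b2: "\<forall>C\<in>\<C>. \<forall>D. cyclic E indep D \<longrightarrow> D \<subseteq> C \<longrightarrow> D \<in> \<C>"
    proof (intro ballI allI impI)
      fix C D assume C: "C \<in> \<C>" and D: "cyclic E indep D" "D \<subseteq> C"
      have DE: "D \<subseteq> E" using conjunct1[OF iffD1[OF cyclic_iff D(1)]] .
      have "flat E ?D (E - D)" using cyclic_flat[OF m DE] D by simp
      moreover have "E - C \<subseteq> E - D" using D by blast
      ultimately have "E - D \<in> ?F" using a2 C by blast
      then obtain C' where "C' \<in> \<C>" "E - D = E - C'" by blast
      then show "D \<in> \<C>" using inj[OF DE sub] by metis
    qed
    have b3: "\<forall>X\<in>\<C>. \<forall>Y\<in>\<C>. modular_pair indep X Y \<longrightarrow> X \<union> Y \<in> \<C>"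
    proof (intro ballI impI)
      fix X Y assume X: "X \<in> \<C>" and Y: "Y \<in> \<C>" and mp: "modular_pair indep X Y"
      have "modular_pair ?D (E - X) (E - Y)" using mod_dual[OF m sub[OF X] sub[OF Y]] mp by simp
      then have "(E - X) \<inter> (E - Y) \<in> ?F" using a3 X Y by blast
      moreover have "(E - X) \<inter> (E - Y) = E - (X \<union> Y)" by blast
      ultimately obtain C' where "C' \<in> \<C>" "E - (X \<union> Y) = E - C'" by auto
      moreover have "X \<union> Y \<subseteq> E" using sub X Y by blast
      ultimately show "X \<union> Y \<in> \<C>" using inj sub by metis
    qed
    show "modular_cyclic_family E indep \<C>" unfolding modular_cyclic_family_def using b1 b2 b3 by blast
  qed
qed

end
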